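(* There exists a smooth $\varrho$-function, i.e. a $\varrho$-function $\varrho:[\omega_1]^2\to\omega$ such that for every limit ordinal $\lambda<\omega_1$ the numerical sequence $\left(\#F_n^\lambda/n\right)_n$ is bounded, where $F_n^\lambda=\{\beta<\lambda:\varrho(\beta,\lambda)\le n\}$.
   Context: A $\varrho$-function is a map $\varrho:[\omega_1]^2\to\omega$ (write $\varrho(\alpha,\beta)$ for $\alpha<\beta$) such that: (1) $\varrho(\alpha,\gamma)\le\max\{\varrho(\alpha,\beta),\varrho(\beta,\gamma)\}$ for all $\alpha<\beta<\gamma<\omega_1$; (2) $\varrho(\alpha,\beta)\le\max\{\varrho(\alpha,\gamma),\varrho(\beta,\gamma)\}$ for all $\alpha<\beta<\gamma<\omega_1$; (3) $\{\alpha<\beta:\varrho(\alpha,\beta)\le n\}$ is finite for all $\beta<\omega_1$ and $n\in\mathbb N$. *)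

theory Defs
  imports Complex_Main "HOL-Library.Countable_Set"
begin

text \<open>omega_1 is represented by an arbitrary well-ordered type whose universe is
uncountable while every proper initial segment is countable (this determines
the order type omega_1 up to isomorphism).\<close>

definition omega1_type :: "'a::wellorder itself \<Rightarrow> bool" where
  "omega1_type _ \<longleftrightarrow> \<not> countable (UNIV :: 'a set) \<and> (\<forall>x::'a. countable {y. y < x})"

definition rho_function :: "('a::wellorder \<Rightarrow> 'a \<Rightarrow> nat) \<Rightarrow> bool" where
  "rho_function rho \<longleftrightarrow>
     (\<forall>\<alpha> \<beta> \<gamma>. \<alpha> < \<beta> \<and> \<beta> < \<gamma> \<longrightarrow> rho \<alpha> \<gamma> \<le> max (rho \<alpha> \<beta>) (rho \<beta> \<gamma>)) \<and>
     (\<forall>\<alpha> \<beta> \<gamma>. \<alpha> < \<beta> \<and> \<beta> < \<gamma> \<longrightarrow> rho \<alpha> \<beta> \<le> max (rho \<alpha> \<gamma>) (rho \<beta> \<gamma>)) \<and>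
     (\<forall>\<beta> (n::nat). finite {\<alpha>. \<alpha> < \<beta> \<and> rho \<alpha> \<beta> \<le> n})"

definition limit_point :: "'a::wellorder \<Rightarrow> bool" where
  "limit_point lam \<longleftrightarrow> (\<exists>\<beta>. \<beta> < lam) \<and> (\<forall>\<beta>. \<beta> < lam \<longrightarrow> (\<exists>\<gamma>. \<beta> < \<gamma> \<and> \<gamma> < lam))"

definition F_set :: "('a::wellorder \<Rightarrow> 'a \<Rightarrow> nat) \<Rightarrow> 'a \<Rightarrow> nat \<Rightarrow> 'a set" where
  "F_set rho lam n = {\<beta>. \<beta> < lam \<and> rho \<beta> lam \<le> n}"

definition smooth_rho_function :: "('a::wellorder \<Rightarrow> 'a \<Rightarrow> nat) \<Rightarrow> bool" where
  "smooth_rho_function rho \<longleftrightarrow> rho_function rho \<and>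
     (\<forall>lam. limit_point lam \<longrightarrow>
        (\<exists>C::real. \<forall>n::nat. n \<ge> 1 \<longrightarrow> real (card (F_set rho lam n)) / real n \<le> C))"

end

theory Submission
  imports Defs
begin

definition good :: "('a::wellorder \<Rightarrow> 'a \<Rightarrow> nat) \<Rightarrow> 'a \<Rightarrow> ('a \<Rightarrow> nat) \<Rightarrow> bool" where
  "good d b f \<longleftrightarrow>
     (\<forall>x y. x < y \<and> y < b \<longrightarrow> f x \<le> max (d x y) (f y)) \<and>
     (\<forall>x y. x < y \<and> y < b \<longrightarrow> d x y \<le> max (f x) (f y)) \<and>
     (\<forall>n. finite {x. x < b \<and> f x \<le> n}) \<and>
     (\<forall>m. \<exists>N. \<forall>n\<ge>N. m * card {x. x < b \<and> f x \<le> n} \<le> n)"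

lemma good_cong:
  assumes "\<And>x y. x < y \<Longrightarrow> y < b \<Longrightarrow> d x y = d' x y"
  shows "good d b f = good d' b f"
  unfolding good_def using assms by (smt (verit) less_trans)

definition dd :: "('a::wellorder \<Rightarrow> 'a \<Rightarrow> nat) \<Rightarrow> 'a \<Rightarrow> 'a \<Rightarrow> nat" where
  "dd d x y = (if x < y then d x y else 0)"

lemma ext_lemma:
  fixes d :: "'a::wellorder \<Rightarrow> 'a \<Rightarrow> nat"
  assumes H: "\<And>c. c < b \<Longrightarrow> good d c (\<lambda>x. d x c)"
    and cnt: "countable {x. x < b}"
  shows "\<exists>f. good d b f"
proof (cases "{x. x < b} = {}")
  case True
  then show ?thesis by (auto simp: good_def)
next
  case False
  define S where "S = {x. x < b}"
  define e where "e = from_nat_into S"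
  have rng: "range e = S" using False cnt unfolding e_def S_def by simp
  define g where "g k = Max (e ` {..k})" for k
  have g_in: "g k \<in> S" for k
  proof -
    have "Max (e ` {..k}) \<in> e ` {..k}" by (rule Max_in) auto
    then show ?thesis unfolding g_def using rng by (simp add: S_def[symmetric]; blast)
  qed
  have g_lt: "g k < b" for k using g_in[of k] by (simp add: S_def)
  have e_le: "e k \<le> g k" for k unfolding g_def by simp
  have g_mono: "j \<le> k \<Longrightarrow> g j \<le> g k" for j k
    unfolding g_def by (rule Max_mono) auto
  have T1: "dd d x z \<le> max (dd d x y) (dd d y z)" if "x \<le> y" "y \<le> z" "z < b" for x y z
  proof (cases "x = y \<or> y = z")
    case True then show ?thesis by auto
  next
    case False
    then have "x < y" "y < z" using that by auto
    then show ?thesis using H[OF \<open>z < b\<close>] by (auto simp: good_def dd_def)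
  qed
  have T2: "dd d x y \<le> max (dd d x z) (dd d y z)" if "x \<le> y" "y \<le> z" "z < b" for x y z
  proof (cases "x = y \<or> y = z")
    case True then show ?thesis by (auto simp: dd_def)
  next
    case False
    then have "x < y" "y < z" using that by auto
    then show ?thesis using H[OF \<open>z < b\<close>] by (auto simp: good_def dd_def)
  qed
  define NN where "NN k = (SOME N. \<forall>n\<ge>N. (2*k) * card {x. x < g k \<and> d x (g k) \<le> n} \<le> n)" for k
  have NN: "n \<ge> NN k \<Longrightarrow> (2*k) * card {x. x < g k \<and> d x (g k) \<le> n} \<le> n" for n k
  proof -
    assume "n \<ge> NN k"
    have "\<exists>N. \<forall>n\<ge>N. (2*k) * card {x. x < g k \<and> d x (g k) \<le> n} \<le> n"
      using H[OF g_lt[of k]] unfolding good_def by blast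
    then have "\<forall>n\<ge>NN k. (2*k) * card {x. x < g k \<and> d x (g k) \<le> n} \<le> n"
      unfolding NN_def by (rule someI_ex)
    then show ?thesis using \<open>n \<ge> NN k\<close> by blast
  qed
  define tm where "tm j = 1 + (\<Sum>i<j. dd d (g i) (g j)) + 2*j + NN j" for j
  define h where "h k = (\<Sum>j\<le>k. tm j)" for k
  have tm_le: "tm k \<le> h k" for k
    unfolding h_def by (rule member_le_sum) auto
  have h_ge: "k \<le> h k" for k
  proof -
    have "(\<Sum>j\<le>k. (1::nat)) \<le> h k" unfolding h_def tm_def by (rule sum_mono) auto
    then show ?thesis by simp
  qed
  have h_mono: "j \<le> k \<Longrightarrow> h j \<le> h k" for j k
    unfolding h_def by (rule sum_mono2) auto
  have h_NN: "NN k \<le> h k" "2*k \<le> h k" for k using tm_le[of k] unfolding tm_def by auto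
  have h_dd: "i < j \<Longrightarrow> dd d (g i) (g j) \<le> h j" for i j
  proof -
    assume "i < j"
    have "dd d (g i) (g j) \<le> (\<Sum>i<j. dd d (g i) (g j))"
      using \<open>i < j\<close> by (intro member_le_sum) auto
    also have "\<dots> \<le> tm j" unfolding tm_def by simp
    also have "\<dots> \<le> h j" by (rule tm_le)
    finally show ?thesis .
  qed
  define kk where "kk x = (LEAST k. x \<le> g k)" for x
  have ex_k: "\<exists>k. x \<le> g k" if "x < b" for x
  proof -
    have "x \<in> S" using that by (simp add: S_def)
    then obtain k where "e k = x" using rng by (metis rangeE)
    then show ?thesis using e_le by metis
  qed
  have kk1: "x \<le> g (kk x)" if "x < b" for x
    unfolding kk_def using ex_k[OF that] by (metis LeastI_ex)
  have kk_mono: "kk x \<le> kk y" if "x \<le> y" "y < b" for x y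
    unfolding kk_def using kk1[OF that(2)] that(1) by (metis Least_le kk_def order_trans)
  define f where "f x = max (dd d x (g (kk x))) (h (kk x))" for x
  have A: "f x \<le> max (d x y) (f y)" if "x < y" "y < b" for x y
  proof -
    let ?k = "kk x" and ?m = "kk y"
    have km: "?k \<le> ?m" using kk_mono that by simp
    have xb: "x < b" using that by simp
    have y1: "y \<le> g ?m" using kk1[OF that(2)] .
    have x1: "x \<le> g ?k" using kk1[OF xb] .
    have hk: "h ?k \<le> h ?m" using h_mono km by simp
    have c: "dd d x (g ?m) \<le> max (dd d x y) (dd d y (g ?m))"
      using T1[of x y "g ?m"] that y1 g_lt by simp
    have "dd d x (g ?k) \<le> max (dd d x y) (max (dd d y (g ?m)) (h ?m))"
    proof (cases "?k = ?m")
      case True then show ?thesis using c by simp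
    next
      case False
      then have "?k < ?m" using km by simp
      have "dd d x (g ?k) \<le> max (dd d x (g ?m)) (dd d (g ?k) (g ?m))"
        using T2[of x "g ?k" "g ?m"] x1 g_mono[of ?k ?m] km g_lt by simp
      moreover have "dd d (g ?k) (g ?m) \<le> h ?m" using h_dd \<open>?k < ?m\<close> by simp
      ultimately show ?thesis using c by linarith
    qed
    moreover have "dd d x y = d x y" using that by (simp add: dd_def)
    ultimately show ?thesis using hk unfolding f_def by linarith
  qed
  have B: "d x y \<le> max (f x) (f y)" if "x < y" "y < b" for x y
  proof -
    let ?k = "kk x" and ?m = "kk y"
    have km: "?k \<le> ?m" using kk_mono that by simp
    have xb: "x < b" using that by simp
    have y1: "y \<le> g ?m" using kk1[OF that(2)] .
    have x1: "x \<le> g ?k" using kk1[OF xb] .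
    have hk: "h ?k \<le> h ?m" using h_mono km by simp
    have c: "dd d x y \<le> max (dd d x (g ?m)) (dd d y (g ?m))"
      using T2[of x y "g ?m"] that y1 g_lt by simp
    have "dd d x (g ?m) \<le> max (dd d x (g ?k)) (h ?m)"
    proof (cases "?k = ?m")
      case True then show ?thesis by simp
    next
      case False
      then have "?k < ?m" using km by simp
      have "dd d x (g ?m) \<le> max (dd d x (g ?k)) (dd d (g ?k) (g ?m))"
        using T1[of x "g ?k" "g ?m"] x1 g_mono[of ?k ?m] km g_lt by simp
      moreover have "dd d (g ?k) (g ?m) \<le> h ?m" using h_dd \<open>?k < ?m\<close> by simp
      ultimately show ?thesis by linarith
    qed
    moreover have "dd d x y = d x y" using that by (simp add: dd_def)
    ultimately show ?thesis using hk c unfolding f_def by linarith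
  qed
  define J where "J n = {j. h j \<le> n}" for n
  have Jfin: "finite (J n)" for n using h_ge unfolding J_def
    by (metis (mono_tags, lifting) finite_nat_set_iff_bounded_le le_trans mem_Collect_eq)
  have cover: "{x. x < b \<and> f x \<le> n} \<subseteq> insert (g (Max (J n))) {x. x < g (Max (J n)) \<and> d x (g (Max (J n))) \<le> n}"
    if JN: "J n \<noteq> {}" for n
  proof
    define M where "M = Max (J n)"
    have MJ: "h M \<le> n" using Max_in[OF Jfin JN] unfolding M_def J_def by simp
    fix x assume "x \<in> {x. x < b \<and> f x \<le> n}"
    then have xb: "x < b" and fx: "f x \<le> n" by auto
    let ?k = "kk x"
    have a1: "dd d x (g ?k) \<le> n" "h ?k \<le> n" using fx unfolding f_def by auto
    then have "?k \<in> J n" by (simp add: J_def)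
    then have kM: "?k \<le> M" unfolding M_def using Jfin by simp
    have x1: "x \<le> g ?k" using kk1[OF xb] .
    have "dd d x (g M) \<le> n"
    proof (cases "?k = M")
      case True then show ?thesis using a1 by simp
    next
      case False
      then have "?k < M" using kM by simp
      have "dd d x (g M) \<le> max (dd d x (g ?k)) (dd d (g ?k) (g M))"
        using T1[of x "g ?k" "g M"] x1 g_mono[of ?k M] kM g_lt by simp
      moreover have "dd d (g ?k) (g M) \<le> h M" using h_dd \<open>?k < M\<close> by simp
      ultimately show ?thesis using a1 MJ by linarith
    qed
    moreover have "x \<le> g M" using x1 g_mono[OF kM] by simp
    ultimately show "x \<in> insert (g (Max (J n))) {x. x < g (Max (J n)) \<and> d x (g (Max (J n))) \<le> n}"
      unfolding M_def[symmetric] by (cases "x = g M") (auto simp: dd_def split: if_splits)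
  qed
  have Cfin: "finite {x. x < b \<and> f x \<le> n}" for n
  proof (cases "J n = {}")
    case True
    then have "{x. x < b \<and> f x \<le> n} = {}" by (auto simp: f_def J_def)
    then show ?thesis by (metis finite.emptyI)
  next
    case False
    have "finite {x. x < g (Max (J n)) \<and> d x (g (Max (J n))) \<le> n}"
      using H[OF g_lt] unfolding good_def by blast
    then show ?thesis using finite_subset[OF cover[OF False]] by simp
  qed
  have Crat: "\<exists>N. \<forall>n\<ge>N. m * card {x. x < b \<and> f x \<le> n} \<le> n" for m
  proof (intro exI allI impI)
    fix n assume nN: "n \<ge> h m"
    then have mJ: "m \<in> J n" by (simp add: J_def)
    then have JN: "J n \<noteq> {}" by auto
    define M where "M = Max (J n)"
    have MJ: "h M \<le> n" using Max_in[OF Jfin JN] unfolding M_def J_def by simp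
    have mM: "m \<le> M" using mJ Jfin unfolding M_def by simp
    define F where "F = {x. x < g M \<and> d x (g M) \<le> n}"
    have Ff: "finite F" using H[OF g_lt] unfolding good_def F_def by blast
    have c1: "card {x. x < b \<and> f x \<le> n} \<le> card F + 1"
    proof -
      have "card {x. x < b \<and> f x \<le> n} \<le> card (insert (g M) F)"
        using card_mono[OF _ cover[OF JN]] Ff unfolding M_def F_def by simp
      also have "\<dots> \<le> card F + 1" by (simp add: card_insert_if Ff)
      finally show ?thesis .
    qed
    have c2: "(2*M) * card F \<le> n" using NN[of M n] h_NN(1)[of M] MJ unfolding F_def by simp
    have c3: "2*M \<le> n" using h_NN(2)[of M] MJ by simp
    have "m * card {x. x < b \<and> f x \<le> n} \<le> M * (card F + 1)"
      using mult_le_mono[OF mM c1] .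
    also have "\<dots> = M * card F + M" by simp
    also have "\<dots> \<le> n" using c2 c3 by simp
    finally show "m * card {x. x < b \<and> f x \<le> n} \<le> n" .
  qed
  show ?thesis using A B Cfin Crat unfolding good_def by blast
qed

theorem mainTheorem18:
  assumes "omega1_type TYPE('a::wellorder)"
  shows "\<exists>rho :: 'a \<Rightarrow> 'a \<Rightarrow> nat. smooth_rho_function rho"
proof -
  have cnt: "countable {y. y < x}" for x :: 'a
    using assms by (simp add: omega1_type_def)
  define r :: "('a \<times> 'a) set" where "r = {(x, y). x < y}"
  have wfr: "wf r" unfolding r_def by (rule wf)
  define R :: "'a \<Rightarrow> 'a \<Rightarrow> nat" where
    "R = wfrec r (\<lambda>G b. SOME f. good (\<lambda>x c. G c x) b f)"
  define rho :: "'a \<Rightarrow> 'a \<Rightarrow> nat" where "rho = (\<lambda>x c. R c x)"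
  have G: "good rho b (R b)" for b
  proof (induction b rule: less_induct)
    case (less b)
    have eq: "R b = (SOME f. good (\<lambda>x c. cut R r b c x) b f)"
      unfolding R_def by (subst wfrec[OF wfr]) simp
    have cg: "good (\<lambda>x c. cut R r b c x) b f = good rho b f" for f
      by (rule good_cong) (simp add: cut_apply r_def rho_def)
    have "\<exists>f. good rho b f"
    proof (rule ext_lemma)
      fix c assume "c < b"
      then show "good rho c (\<lambda>x. rho x c)" using less by (simp add: rho_def)
    qed (rule cnt)
    then have "good rho b (SOME f. good rho b f)" by (rule someI_ex)
    then show ?case using eq cg by simp
  qed
  have G': "good rho b (\<lambda>x. rho x b)" for b using G[of b] by (simp add: rho_def)
  have "rho_function rho"
    unfolding rho_function_def using G' unfolding good_def by blast
  moreover have "\<exists>C::real. \<forall>n::nat. n \<ge> 1 \<longrightarrow> real (card (F_set rho lam n)) / real n \<le> C" for lam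
  proof -
    obtain N where N: "\<And>n. n \<ge> N \<Longrightarrow> 1 * card (F_set rho lam n) \<le> n"
      using G'[of lam] unfolding good_def F_set_def by blast
    define C where "C = real (\<Sum>n<N. card (F_set rho lam n)) + 1"
    show ?thesis
    proof (intro exI allI impI)
      fix n :: nat assume n1: "n \<ge> 1"
      show "real (card (F_set rho lam n)) / real n \<le> C"
      proof (cases "n \<ge> N")
        case True
        then have "real (card (F_set rho lam n)) \<le> real n" using N by simp
        then have "real (card (F_set rho lam n)) / real n \<le> 1" using n1 by simp
        moreover have "0 \<le> real (\<Sum>n<N. card (F_set rho lam n))" by (rule of_nat_0_le_iff)
        ultimately show ?thesis unfolding C_def by linarith
      next
        case False
        have "real (card (F_set rho lam n)) / real n \<le> real (card (F_set rho lam n))"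
          using n1 mult_left_mono[of 1 "real n" "real (card (F_set rho lam n))"] by (simp add: divide_le_eq)
        also have "card (F_set rho lam n) \<le> (\<Sum>n<N. card (F_set rho lam n))"
          using False by (intro member_le_sum) auto
        then have "real (card (F_set rho lam n)) \<le> real (\<Sum>n<N. card (F_set rho lam n))" by (rule of_nat_mono)
        then have "real (card (F_set rho lam n)) \<le> C" unfolding C_def by linarith
        finally show ?thesis .
      qed
    qed
  qed
  ultimately show ?thesis unfolding smooth_rho_function_def by blast
qed

end
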